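(* Assume the graph $(\overline{\mathbb V},\overline E)$ is connected. Let $\sigma$ be a uniform random bijection from $\{1,\dots,|\overline E|\}$ to $\overline E$, and let $\eta^*$ be the configuration produced by the perfect simulation procedure described in the context. Then the law of $\eta^*$ is the unique invariant measure of the spiking disagreement process $\eta(t)$.
   Context: Graph: finite oriented graph $(\overline{\mathbb V},\overline E)$ with internal vertices $\mathbb V$, boundary vertices $\partial\mathbb V$; $E$ = edges with both endpoints in $\mathbb V$, $\partial E$ = edges with one endpoint in $\partial\mathbb V$ (written $ij$ with $j\in\partial\mathbb V$); no edges between boundary vertices. Two edges are neighbors if they share exactly one vertex. Spiking disagreement process: Markov process on $\mathcal E_n:=\{\eta\in\{0,1\}^{\overline E}:\eta_{ij}=1\ \forall ij\in\partial E,\ \text{and }\eta_{ij}+\eta_{k\ell}>0\text{ whenever }ij,k\ell\in E\text{ share exactly one vertex}\}$ with generator $L^\eta f(\eta)=\sum_{ij\in\overline E}\eta_{ij}[f(H_{ij}\eta)-f(\eta)]$, where $(H_{ij}\eta)_{k\ell}=0$ if $k\ell=ij$ and $j\in\mathbb V$; $(H_{ij}\eta)_{k\ell}=1$ if $|\{k,\ell\}\cap\{i,j\}|=1$; and $(H_{ij}\eta)_{k\ell}=\eta_{k\ell}$ otherwise. (It is the indicator process $\eta_{ij}(t)=\mathbf 1\{O_i(t)\neq O_j(t)\}$ of disagreement edges of the opinion process.) Perfect simulation: set $\eta_{ij}[0]=0$ for $ij\in E$, $\eta_{ij}[0]=1$ for $ij\in\partial E$, and $E[0]=\partial E$. For $n\ge0$: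 $\eta_{ij}[n+1]=\eta_{ij}[n]+\mathbf 1\{ij\notin E[n]\text{ and }ij\text{ is a neighbor of }\sigma(n+1)\}$ and $E[n+1]=E[n]\cup\{\sigma(n+1)\}\cup\{\text{neighbors of }\sigma(n+1)\}$. $\eta^*:=\eta[n]$ for the first $n$ with $E[n]=\overline E$. *)

theory Defs
  imports "HOL-Probability.Probability"
begin

text \<open>Vertices have type 'v; V = internal vertices, B = boundary vertices,
  Eb = the oriented edge set (pairs (i,j)).  Configurations are functions
  on edges with values in nat (0/1 on Eb, 0 off Eb).\<close>

definition intE :: "'v set \<Rightarrow> ('v \<times> 'v) set \<Rightarrow> ('v \<times> 'v) set" where
  "intE V Eb = {e \<in> Eb. snd e \<in> V}"

definition bdE :: "'v set \<Rightarrow> ('v \<times> 'v) set \<Rightarrow> ('v \<times> 'v) set" where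
  "bdE B Eb = {e \<in> Eb. snd e \<in> B}"

definition nbr :: "'v \<times> 'v \<Rightarrow> 'v \<times> 'v \<Rightarrow> bool" where
  "nbr e f \<longleftrightarrow> card ({fst e, snd e} \<inter> {fst f, snd f}) = 1"

definition graph_connected :: "'v set \<Rightarrow> ('v \<times> 'v) set \<Rightarrow> bool" where
  "graph_connected W Eb \<longleftrightarrow> (\<forall>u\<in>W. \<forall>v\<in>W. (u, v) \<in> (Eb \<union> Eb\<inverse>)\<^sup>*)"

definition state_space :: "'v set \<Rightarrow> 'v set \<Rightarrow> ('v \<times> 'v) set \<Rightarrow> (('v \<times> 'v) \<Rightarrow> nat) set" where
  "state_space V B Eb = {\<eta>. (\<forall>e. e \<notin> Eb \<longrightarrow> \<eta> e = 0) \<and> (\<forall>e\<in>Eb. \<eta> e \<in> {0, 1})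
      \<and> (\<forall>e\<in>bdE B Eb. \<eta> e = 1)
      \<and> (\<forall>e\<in>intE V Eb. \<forall>f\<in>intE V Eb. nbr e f \<longrightarrow> \<eta> e + \<eta> f > 0)}"

definition spike :: "'v set \<Rightarrow> ('v \<times> 'v) set \<Rightarrow> ('v \<times> 'v) \<Rightarrow> (('v \<times> 'v) \<Rightarrow> nat) \<Rightarrow> (('v \<times> 'v) \<Rightarrow> nat)" where
  "spike V Eb e \<eta> = (\<lambda>f. if f \<in> Eb then
      (if f = e \<and> snd e \<in> V then 0 else if nbr f e then 1 else \<eta> f) else \<eta> f)"

definition generator :: "'v set \<Rightarrow> ('v \<times> 'v) set \<Rightarrow> ((('v \<times> 'v) \<Rightarrow> nat) \<Rightarrow> real)
     \<Rightarrow> (('v \<times> 'v) \<Rightarrow> nat) \<Rightarrow> real" where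
  "generator V Eb f \<eta> = (\<Sum>e\<in>Eb. real (\<eta> e) * (f (spike V Eb e \<eta>) - f \<eta>))"

definition invariant_measure :: "'v set \<Rightarrow> 'v set \<Rightarrow> ('v \<times> 'v) set \<Rightarrow> (('v \<times> 'v) \<Rightarrow> nat) pmf \<Rightarrow> bool" where
  "invariant_measure V B Eb p \<longleftrightarrow> set_pmf p \<subseteq> state_space V B Eb
     \<and> (\<forall>f. measure_pmf.expectation p (generator V Eb f) = 0)"

primrec sim :: "'v set \<Rightarrow> ('v \<times> 'v) set \<Rightarrow> (nat \<Rightarrow> 'v \<times> 'v) \<Rightarrow> nat
     \<Rightarrow> (('v \<times> 'v) \<Rightarrow> nat) \<times> ('v \<times> 'v) set" where
  "sim B Eb \<sigma> 0 = ((\<lambda>e. if e \<in> bdE B Eb then 1 else 0), bdE B Eb)"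
| "sim B Eb \<sigma> (Suc n) =
     (let \<eta> = fst (sim B Eb \<sigma> n); En = snd (sim B Eb \<sigma> n); s = \<sigma> (Suc n) in
      ((\<lambda>e. \<eta> e + (if e \<in> Eb \<and> e \<notin> En \<and> nbr e s then 1 else 0)),
       En \<union> {s} \<union> {e \<in> Eb. nbr e s}))"

definition eta_star :: "'v set \<Rightarrow> ('v \<times> 'v) set \<Rightarrow> (nat \<Rightarrow> 'v \<times> 'v) \<Rightarrow> (('v \<times> 'v) \<Rightarrow> nat)" where
  "eta_star B Eb \<sigma> = fst (sim B Eb \<sigma> (LEAST n. snd (sim B Eb \<sigma> n) = Eb))"

definition orderings :: "('v \<times> 'v) set \<Rightarrow> (nat \<Rightarrow> 'v \<times> 'v) set" where
  "orderings Eb = {\<sigma> \<in> {1..card Eb} \<rightarrow>\<^sub>E Eb. bij_betw \<sigma> {1..card Eb} Eb}"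

definition perfect_sim_law :: "'v set \<Rightarrow> ('v \<times> 'v) set \<Rightarrow> (('v \<times> 'v) \<Rightarrow> nat) pmf" where
  "perfect_sim_law B Eb = map_pmf (eta_star B Eb) (pmf_of_set (orderings Eb))"

end

theory Submission
  imports Defs
begin

lemma nbr_sym: "nbr e f = nbr f e"
  unfolding nbr_def by (simp add: Int_commute)

lemma nbr_irrefl[simp]: "fst e \<noteq> snd e \<Longrightarrow> \<not> nbr e e"
  unfolding nbr_def by (simp add: card_insert_if)

locale setting =
  fixes V B :: "'v set" and Eb :: "('v \<times> 'v) set"
  assumes finV: "finite V" and finB: "finite B" and disj: "V \<inter> B = {}"
    and sub: "Eb \<subseteq> V \<times> (V \<union> B)"
    and loopfree: "\<forall>(i, j)\<in>Eb. i \<noteq> j"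
begin

abbreviation "S \<equiv> state_space V B Eb"
abbreviation "bd \<equiv> bdE B Eb"
abbreviation "m \<equiv> card Eb"

lemma finEb: "finite Eb"
  using sub finV finB by (meson finite_SigmaI finite_Un finite_subset)

lemma noloop: "e \<in> Eb \<Longrightarrow> \<not> nbr e e"
  using loopfree by (cases e) auto

lemma nbr_ne: "e \<in> Eb \<Longrightarrow> nbr e f \<Longrightarrow> e \<noteq> f"
  using noloop by metis

lemma bd_sub: "bd \<subseteq> Eb" unfolding bdE_def by auto

lemma int_iff: "e \<in> Eb \<Longrightarrow> (snd e \<in> V) \<longleftrightarrow> e \<notin> bd"
  using sub disj unfolding bdE_def by auto

lemma intE_iff: "intE V Eb = Eb - bd"
  using sub disj unfolding bdE_def intE_def by auto

lemma S_iff: "\<eta> \<in> S \<longleftrightarrow> (\<forall>e. e \<notin> Eb \<longrightarrow> \<eta> e = 0) \<and> (\<forall>e\<in>Eb. \<eta> e = 0 \<or> \<eta> e = 1)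
      \<and> (\<forall>e\<in>bd. \<eta> e = 1)
      \<and> (\<forall>e\<in>Eb - bd. \<forall>f\<in>Eb - bd. nbr e f \<longrightarrow> \<eta> e + \<eta> f > 0)"
  unfolding state_space_def intE_iff by auto

lemma finS: "finite S"
proof -
  have "S \<subseteq> (\<lambda>T e. if e \<in> T then 1 else 0) ` Pow Eb"
  proof
    fix \<eta> assume h: "\<eta> \<in> S"
    have "\<eta> = (\<lambda>e. if e \<in> {e\<in>Eb. \<eta> e = 1} then 1 else 0)"
      using h unfolding S_iff by (auto simp: fun_eq_iff)
    then show "\<eta> \<in> (\<lambda>T e. if e \<in> T then 1 else 0) ` Pow Eb" by blast
  qed
  then show ?thesis using finEb by (meson finite_Pow_iff finite_imageI finite_subset)
qed

lemma spike_S: assumes "\<eta> \<in> S" "e \<in> Eb" shows "spike V Eb e \<eta> \<in> S"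
  using assms noloop int_iff unfolding S_iff spike_def
  by (simp add: nbr_sym)

lemma spike_zero: assumes "\<eta> \<in> S" "e \<in> Eb" "\<eta> e = 0" shows "spike V Eb e \<eta> = \<eta>"
proof -
  have "e \<notin> bd" using assms unfolding S_iff by auto
  have "\<eta> f = 1" if "f \<in> Eb" "nbr f e" for f
  proof (cases "f \<in> bd")
    case True then show ?thesis using assms unfolding S_iff by auto
  next
    case False then show ?thesis using assms \<open>e \<notin> bd\<close> that unfolding S_iff
      by (metis DiffI add_0 less_numeral_extra(3) nbr_sym)
  qed
  then show ?thesis using assms \<open>e \<notin> bd\<close> int_iff unfolding spike_def by (auto simp: fun_eq_iff)
qed

lemma gen_S: assumes "\<eta> \<in> S"
  shows "generator V Eb f \<eta> = (\<Sum>e\<in>Eb. f (spike V Eb e \<eta>) - f \<eta>)"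
  unfolding generator_def
proof (rule sum.cong[OF refl])
  fix e assume "e \<in> Eb"
  then have "\<eta> e = 0 \<or> \<eta> e = 1" using assms unfolding S_iff by auto
  then show "real (\<eta> e) * (f (spike V Eb e \<eta>) - f \<eta>) = f (spike V Eb e \<eta>) - f \<eta>"
    using spike_zero[OF assms \<open>e \<in> Eb\<close>] by auto
qed

end

context setting begin

definition es :: "(nat \<Rightarrow> 'v \<times> 'v) \<Rightarrow> ('v \<times> 'v \<Rightarrow> nat)" where
 "es \<sigma> g = (if g \<in> Eb \<and> (g \<in> bd \<or> (\<exists>i\<in>{1..m}. \<exists>j\<in>{1..m}. i < j \<and> \<sigma> j = g \<and> nbr g (\<sigma> i))) then 1 else 0)"

lemma sim_mono: "snd (sim B Eb \<sigma> n) \<subseteq> snd (sim B Eb \<sigma> (n + j))"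
  by (induction j) (auto simp: Let_def)

lemma sim_stable: "Eb \<subseteq> snd (sim B Eb \<sigma> n) \<Longrightarrow> fst (sim B Eb \<sigma> (n + j)) = fst (sim B Eb \<sigma> n)"
proof (induction j)
  case 0 then show ?case by simp
next
  case (Suc j)
  have "Eb \<subseteq> snd (sim B Eb \<sigma> (n + j))" using Suc.prems sim_mono by blast
  then show ?case using Suc by (auto simp: Let_def fun_eq_iff)
qed

lemma ord_bij: "\<sigma> \<in> orderings Eb \<Longrightarrow> bij_betw \<sigma> {1..m} Eb"
  unfolding orderings_def by auto

lemma sim_char:
  assumes "\<sigma> \<in> orderings Eb" "n \<le> m"
  shows "snd (sim B Eb \<sigma> n) = bd \<union> {g\<in>Eb. \<exists>k\<in>{1..n}. \<sigma> k = g \<or> nbr g (\<sigma> k)}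
    \<and> fst (sim B Eb \<sigma> n) = (\<lambda>g. if g\<in>Eb \<and> (g \<in> bd \<or> (\<exists>k\<in>{1..n}. nbr g (\<sigma> k) \<and> (\<forall>j\<in>{1..k}. \<sigma> j \<noteq> g))) then 1 else 0)"
  using assms(2)
proof (induction n)
  case 0
  then show ?case using bd_sub by (auto simp: fun_eq_iff)
next
  case (Suc n)
  have bij: "bij_betw \<sigma> {1..m} Eb" using ord_bij[OF assms(1)] .
  have s: "\<sigma> (Suc n) \<in> Eb" using bij Suc.prems by (auto simp: bij_betw_def)
  have IH: "snd (sim B Eb \<sigma> n) = bd \<union> {g\<in>Eb. \<exists>k\<in>{1..n}. \<sigma> k = g \<or> nbr g (\<sigma> k)}"
     "fst (sim B Eb \<sigma> n) = (\<lambda>g. if g\<in>Eb \<and> (g \<in> bd \<or> (\<exists>k\<in>{1..n}. nbr g (\<sigma> k) \<and> (\<forall>j\<in>{1..k}. \<sigma> j \<noteq> g))) then 1 else 0)"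
    using Suc by auto
  have E: "snd (sim B Eb \<sigma> (Suc n)) = bd \<union> {g\<in>Eb. \<exists>k\<in>{1..Suc n}. \<sigma> k = g \<or> nbr g (\<sigma> k)}"
  proof -
    have ins: "{1..Suc n} = insert (Suc n) {1..n}" by auto
    show ?thesis unfolding ins using s by (simp add: Let_def IH(1)) blast
  qed
  have F: "fst (sim B Eb \<sigma> (Suc n)) g = (if g\<in>Eb \<and> (g \<in> bd \<or> (\<exists>k\<in>{1..Suc n}. nbr g (\<sigma> k) \<and> (\<forall>j\<in>{1..k}. \<sigma> j \<noteq> g))) then 1 else 0)" for g
  proof -
    have eq: "fst (sim B Eb \<sigma> (Suc n)) g = fst (sim B Eb \<sigma> n) g + (if g \<in> Eb \<and> g \<notin> snd (sim B Eb \<sigma> n) \<and> nbr g (\<sigma> (Suc n)) then 1 else 0)"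
      by (simp add: Let_def)
    show ?thesis
    proof (cases "g \<in> Eb \<and> g \<notin> bd")
      case False then show ?thesis unfolding eq IH by auto
    next
      case True
      show ?thesis
      proof (cases "g \<in> snd (sim B Eb \<sigma> n)")
        case False
        then have nk: "\<forall>k\<in>{1..n}. \<sigma> k \<noteq> g \<and> \<not> nbr g (\<sigma> k)" using True IH(1) by auto
        show ?thesis
        proof (cases "nbr g (\<sigma> (Suc n))")
          case nb: True
          have ne: "\<sigma> (Suc n) \<noteq> g" using nbr_ne[of g] True nb by metis
          have "\<exists>k\<in>{1..Suc n}. nbr g (\<sigma> k) \<and> (\<forall>j\<in>{1..k}. \<sigma> j \<noteq> g)"
            apply (rule bexI[of _ "Suc n"])
            using nk ne nb by (auto simp: le_Suc_eq)
          then show ?thesis unfolding eq IH(2) using nk True False nb by auto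
        next
          case nb: False
          show ?thesis unfolding eq IH(2) using nk True False nb by (auto simp: le_Suc_eq)
        qed
      next
        case inE: True
        then obtain k0 where k0: "k0 \<in> {1..n}" "\<sigma> k0 = g \<or> nbr g (\<sigma> k0)" using True IH(1) by auto
        have "(\<exists>k\<in>{1..Suc n}. nbr g (\<sigma> k) \<and> (\<forall>j\<in>{1..k}. \<sigma> j \<noteq> g)) \<longleftrightarrow>
              (\<exists>k\<in>{1..n}. nbr g (\<sigma> k) \<and> (\<forall>j\<in>{1..k}. \<sigma> j \<noteq> g))"
        proof
          assume "\<exists>k\<in>{1..Suc n}. nbr g (\<sigma> k) \<and> (\<forall>j\<in>{1..k}. \<sigma> j \<noteq> g)"
          then obtain k where k: "k \<in> {1..Suc n}" "nbr g (\<sigma> k)" "\<forall>j\<in>{1..k}. \<sigma> j \<noteq> g" by blast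
          show "\<exists>k\<in>{1..n}. nbr g (\<sigma> k) \<and> (\<forall>j\<in>{1..k}. \<sigma> j \<noteq> g)"
          proof (cases "k \<le> n")
            case True then show ?thesis using k by auto
          next
            case False
            then have "k = Suc n" using k by auto
            then have "\<sigma> k0 \<noteq> g" using k k0 by auto
            then have "nbr g (\<sigma> k0)" using k0 by auto
            moreover have "\<forall>j\<in>{1..k0}. \<sigma> j \<noteq> g" using k k0 \<open>k = Suc n\<close> by auto
            ultimately show ?thesis using k0 by auto
          qed
        qed auto
        then show ?thesis unfolding eq IH(2) using inE True by simp
      qed
    qed
  qed
  show ?case using E F by auto
qed

end

context setting begin

lemma ord_surj: "\<sigma> \<in> orderings Eb \<Longrightarrow> g \<in> Eb \<Longrightarrow> \<exists>k\<in>{1..m}. \<sigma> k = g"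
  using ord_bij[of \<sigma>] unfolding bij_betw_def by (metis imageE)

lemma ord_inj: "\<sigma> \<in> orderings Eb \<Longrightarrow> i \<in> {1..m} \<Longrightarrow> j \<in> {1..m} \<Longrightarrow> \<sigma> i = \<sigma> j \<Longrightarrow> i = j"
  using ord_bij[of \<sigma>] unfolding bij_betw_def inj_on_def by metis

lemma ord_in: "\<sigma> \<in> orderings Eb \<Longrightarrow> i \<in> {1..m} \<Longrightarrow> \<sigma> i \<in> Eb"
  using ord_bij[of \<sigma>] unfolding bij_betw_def by auto

lemma eta_star_es: assumes "\<sigma> \<in> orderings Eb" shows "eta_star B Eb \<sigma> = es \<sigma>"
proof -
  have bij: "bij_betw \<sigma> {1..m} Eb" using ord_bij[OF assms] .
  have Em: "snd (sim B Eb \<sigma> m) = Eb"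
  proof -
    have "snd (sim B Eb \<sigma> m) = bd \<union> {g\<in>Eb. \<exists>k\<in>{1..m}. \<sigma> k = g \<or> nbr g (\<sigma> k)}"
      using sim_char[OF assms le_refl] by blast
    then show ?thesis using ord_surj[OF assms] bd_sub by blast
  qed
  define L where "L = (LEAST n. snd (sim B Eb \<sigma> n) = Eb)"
  have EL: "snd (sim B Eb \<sigma> L) = Eb" unfolding L_def using Em by (rule LeastI)
  have Lm: "L \<le> m" unfolding L_def using Em by (rule Least_le)
  have "fst (sim B Eb \<sigma> m) = fst (sim B Eb \<sigma> (L + (m - L)))" using Lm by simp
  also have "\<dots> = fst (sim B Eb \<sigma> L)" using sim_stable EL by simp
  finally have 1: "eta_star B Eb \<sigma> = fst (sim B Eb \<sigma> m)" unfolding eta_star_def L_def by simp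
  have 2: "(\<exists>k\<in>{1..m}. nbr g (\<sigma> k) \<and> (\<forall>j\<in>{1..k}. \<sigma> j \<noteq> g)) \<longleftrightarrow>
           (\<exists>i\<in>{1..m}. \<exists>j\<in>{1..m}. i < j \<and> \<sigma> j = g \<and> nbr g (\<sigma> i))" if gE: "g \<in> Eb" for g
  proof
    assume "\<exists>k\<in>{1..m}. nbr g (\<sigma> k) \<and> (\<forall>j\<in>{1..k}. \<sigma> j \<noteq> g)"
    then obtain k where k: "k\<in>{1..m}" "nbr g (\<sigma> k)" "\<forall>j\<in>{1..k}. \<sigma> j \<noteq> g" by blast
    obtain j where j: "j \<in> {1..m}" "\<sigma> j = g" using gE ord_surj[OF assms] by blast
    have "k < j" using k j by (metis atLeastAtMost_iff not_le_imp_less)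
    then show "\<exists>i\<in>{1..m}. \<exists>j\<in>{1..m}. i < j \<and> \<sigma> j = g \<and> nbr g (\<sigma> i)" using k j by blast
  next
    assume "\<exists>i\<in>{1..m}. \<exists>j\<in>{1..m}. i < j \<and> \<sigma> j = g \<and> nbr g (\<sigma> i)"
    then obtain i j where ij: "i\<in>{1..m}" "j\<in>{1..m}" "i < j" "\<sigma> j = g" "nbr g (\<sigma> i)" by blast
    have "\<forall>j'\<in>{1..i}. \<sigma> j' \<noteq> g"
    proof
      fix j' assume "j' \<in> {1..i}"
      then have "j' \<in> {1..m}" "j' \<noteq> j" using ij by auto
      then show "\<sigma> j' \<noteq> g" using ij bij unfolding bij_betw_def inj_on_def by metis
    qed
    then show "\<exists>k\<in>{1..m}. nbr g (\<sigma> k) \<and> (\<forall>j\<in>{1..k}. \<sigma> j \<noteq> g)" using ij by blast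
  qed
  show ?thesis unfolding 1
  proof
    fix g
    have "fst (sim B Eb \<sigma> m) g = (if g\<in>Eb \<and> (g \<in> bd \<or> (\<exists>k\<in>{1..m}. nbr g (\<sigma> k) \<and> (\<forall>j\<in>{1..k}. \<sigma> j \<noteq> g))) then 1 else 0)"
      using sim_char[OF assms le_refl] by simp
    then show "fst (sim B Eb \<sigma> m) g = es \<sigma> g" unfolding es_def using 2[of g] by (cases "g \<in> Eb") simp_all
  qed
qed

lemma es_S: assumes "\<sigma> \<in> orderings Eb" shows "es \<sigma> \<in> S"
proof -
  have bij: "bij_betw \<sigma> {1..m} Eb" using ord_bij[OF assms] .
  have "0 < es \<sigma> e + es \<sigma> f" if ef: "e \<in> Eb - bd" "f \<in> Eb - bd" "nbr e f" for e f
  proof (rule ccontr)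
    assume "\<not> ?thesis"
    then have z: "es \<sigma> e = 0" "es \<sigma> f = 0" by auto
    obtain i where i: "i \<in> {1..m}" "\<sigma> i = e" using ef ord_surj[OF assms] by (meson DiffD1)
    obtain j where j: "j \<in> {1..m}" "\<sigma> j = f" using ef ord_surj[OF assms] by (meson DiffD1)
    have "i \<noteq> j" using i j nbr_ne[of e f] ef by auto
    then consider "i < j" | "j < i" by linarith
    then show False
    proof cases
      case 1
      have "\<exists>i'\<in>{1..m}. \<exists>j'\<in>{1..m}. i' < j' \<and> \<sigma> j' = f \<and> nbr f (\<sigma> i')"
        using 1 i j ef(3) nbr_sym by blast
      then show False using z(2) ef unfolding es_def by (auto split: if_splits)
    next
      case 2
      have "\<exists>i'\<in>{1..m}. \<exists>j'\<in>{1..m}. i' < j' \<and> \<sigma> j' = e \<and> nbr e (\<sigma> i')"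
        using 2 i j ef(3) nbr_sym by blast
      then show False using z(1) ef unfolding es_def by (auto split: if_splits)
    qed
  qed
  then show ?thesis unfolding S_iff using bd_sub by (auto simp: es_def)
qed

end

definition cc :: "nat \<Rightarrow> nat \<Rightarrow> nat" where
  "cc k i = (if i = 1 then k else if i \<le> k then i - 1 else i)"
definition dd :: "nat \<Rightarrow> nat \<Rightarrow> nat" where
  "dd k j = (if j = k then 1 else if j < k then j + 1 else j)"

lemma cc_dd: "1 \<le> k \<Longrightarrow> 1 \<le> j \<Longrightarrow> cc k (dd k j) = j"
  unfolding cc_def dd_def by auto
lemma dd_cc: "1 \<le> k \<Longrightarrow> 1 \<le> i \<Longrightarrow> dd k (cc k i) = i"
  unfolding cc_def dd_def by auto
lemma cc_range: "k \<in> {1..n} \<Longrightarrow> i \<in> {1..n} \<Longrightarrow> cc k i \<in> {1..n}"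
  unfolding cc_def by auto
lemma dd_range: "k \<in> {1..n} \<Longrightarrow> i \<in> {1..n} \<Longrightarrow> dd k i \<in> {1..n}"
  unfolding dd_def by auto
lemma cc_mono: "1 \<le> k \<Longrightarrow> 2 \<le> i \<Longrightarrow> i < j \<Longrightarrow> cc k i < cc k j"
  unfolding cc_def by auto
lemma dd_mono: "1 \<le> k \<Longrightarrow> i \<noteq> k \<Longrightarrow> j \<noteq> k \<Longrightarrow> i < j \<Longrightarrow> dd k i < dd k j"
  unfolding dd_def by auto
lemma cc_k: "1 \<le> i \<Longrightarrow> cc k i = k \<Longrightarrow> i = 1"
  unfolding cc_def by (auto split: if_splits)
lemma cc_1[simp]: "cc k 1 = k" unfolding cc_def by simp
lemma cc_Suc0[simp]: "cc k (Suc 0) = k" unfolding cc_def by simp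
lemma dd_gt: "1 \<le> k \<Longrightarrow> 1 \<le> j \<Longrightarrow> j \<noteq> k \<Longrightarrow> 1 < dd k j"
  unfolding dd_def by auto

context setting begin

definition rot :: "(nat \<Rightarrow> nat) \<Rightarrow> (nat \<Rightarrow> 'v \<times> 'v) \<Rightarrow> (nat \<Rightarrow> 'v \<times> 'v)" where
  "rot p \<sigma> = restrict (\<sigma> \<circ> p) {1..m}"

lemma rot_ord:
  assumes "\<sigma> \<in> orderings Eb" "\<And>i. i \<in> {1..m} \<Longrightarrow> p i \<in> {1..m}" "\<And>i. i \<in> {1..m} \<Longrightarrow> q i \<in> {1..m}"
    "\<And>i. i \<in> {1..m} \<Longrightarrow> p (q i) = i" "\<And>i. i \<in> {1..m} \<Longrightarrow> q (p i) = i"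
  shows "rot p \<sigma> \<in> orderings Eb"
proof -
  have inj: "rot p \<sigma> i = rot p \<sigma> j \<Longrightarrow> i \<in> {1..m} \<Longrightarrow> j \<in> {1..m} \<Longrightarrow> i = j" for i j
  proof -
    assume h: "rot p \<sigma> i = rot p \<sigma> j" "i \<in> {1..m}" "j \<in> {1..m}"
    then have "\<sigma> (p i) = \<sigma> (p j)" unfolding rot_def by simp
    then have "p i = p j" using ord_inj[OF assms(1) assms(2)[OF h(2)] assms(2)[OF h(3)]] by simp
    then have "q (p i) = q (p j)" by simp
    then show "i = j" using assms(5)[OF h(2)] assms(5)[OF h(3)] by simp
  qed
  have img: "rot p \<sigma> ` {1..m} = Eb"
  proof
    show "rot p \<sigma> ` {1..m} \<subseteq> Eb"
    proof
      fix x assume "x \<in> rot p \<sigma> ` {1..m}"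
      then obtain i where i: "i \<in> {1..m}" "x = rot p \<sigma> i" by blast
      then have "x = \<sigma> (p i)" unfolding rot_def by simp
      then show "x \<in> Eb" using ord_in[OF assms(1) assms(2)[OF i(1)]] by simp
    qed
    show "Eb \<subseteq> rot p \<sigma> ` {1..m}"
    proof
      fix g assume "g \<in> Eb"
      then obtain j where j: "j \<in> {1..m}" "\<sigma> j = g" using ord_surj[OF assms(1)] by blast
      have "rot p \<sigma> (q j) = \<sigma> (p (q j))" unfolding rot_def using assms(3)[OF j(1)] by simp
      also have "\<dots> = g" using assms(4)[OF j(1)] j(2) by simp
      finally show "g \<in> rot p \<sigma> ` {1..m}" using assms(3)[OF j(1)] by (metis imageI)
    qed
  qed
  have b2: "bij_betw (rot p \<sigma>) {1..m} Eb"
    unfolding bij_betw_def inj_on_def using inj img by blast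
  moreover have "rot p \<sigma> \<in> {1..m} \<rightarrow>\<^sub>E Eb"
    using img unfolding rot_def by auto
  ultimately show ?thesis unfolding orderings_def by blast
qed

lemma rot_rot:
  assumes "\<sigma> \<in> orderings Eb" "\<And>i. i \<in> {1..m} \<Longrightarrow> q i \<in> {1..m}"
    "\<And>i. i \<in> {1..m} \<Longrightarrow> p (q i) = i"
  shows "rot q (rot p \<sigma>) = \<sigma>"
proof (rule ext)
  fix i show "rot q (rot p \<sigma>) i = \<sigma> i"
  proof (cases "i \<in> {1..m}")
    case True
    have qi: "q i \<in> {1..m}" using assms(2) True .
    have "rot q (rot p \<sigma>) i = rot p \<sigma> (q i)" unfolding rot_def using True by simp
    also have "\<dots> = \<sigma> (p (q i))" unfolding rot_def using qi by simp
    finally show ?thesis using assms(3)[OF True] by simp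
  next
    case False
    have "\<sigma> \<in> {1..m} \<rightarrow>\<^sub>E Eb" using assms(1) unfolding orderings_def by blast
    then have u: "\<sigma> i = undefined" using False by (rule PiE_arb)
    have "rot q (rot p \<sigma>) i = undefined" unfolding rot_def restrict_def using False by auto
    then show ?thesis using u by (rule trans[OF _ sym])
  qed
qed

lemma rot_bij: assumes k: "k \<in> {1..m}" shows "bij_betw (rot (cc k)) (orderings Eb) (orderings Eb)"
proof -
  have k1: "1 \<le> k" using k by simp
  have cr: "\<And>i. i \<in> {1..m} \<Longrightarrow> cc k i \<in> {1..m}" by (rule cc_range[OF k])
  have dr: "\<And>i. i \<in> {1..m} \<Longrightarrow> dd k i \<in> {1..m}" by (rule dd_range[OF k])
  have cd: "\<And>i. i \<in> {1..m} \<Longrightarrow> cc k (dd k i) = i" using cc_dd[OF k1] by simp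
  have dc: "\<And>i. i \<in> {1..m} \<Longrightarrow> dd k (cc k i) = i" using dd_cc[OF k1] by simp
  show ?thesis
  proof (rule bij_betw_byWitness[where f'="rot (dd k)"])
    show "\<forall>a\<in>orderings Eb. rot (dd k) (rot (cc k) a) = a"
      using rot_rot[OF _ dr cd] by blast
    show "\<forall>a\<in>orderings Eb. rot (cc k) (rot (dd k) a) = a"
      using rot_rot[OF _ cr dc] by blast
    show "rot (cc k) ` orderings Eb \<subseteq> orderings Eb"
      using rot_ord[OF _ cr dr cd dc] by blast
    show "rot (dd k) ` orderings Eb \<subseteq> orderings Eb"
      using rot_ord[OF _ dr cr dc cd] by blast
  qed
qed

end

context setting begin

lemma spike_rot:
  assumes s: "\<sigma> \<in> orderings Eb" and k: "k \<in> {1..m}"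
  shows "spike V Eb (\<sigma> k) (es \<sigma>) = es (rot (cc k) \<sigma>)"
proof
  fix g
  define e where "e = \<sigma> k"
  define \<tau> where "\<tau> = rot (cc k) \<sigma>"
  have k1: "1 \<le> k" using k by auto
  have eE: "e \<in> Eb" unfolding e_def using ord_in[OF s k] .
  have \<tau>i: "\<tau> i = \<sigma> (cc k i)" if "i \<in> {1..m}" for i
    using that unfolding \<tau>_def rot_def by auto
  have \<tau>1: "\<tau> 1 = e" using \<tau>i[of 1] k unfolding e_def by auto
  have ccr: "cc k i \<in> {1..m}" if "i \<in> {1..m}" for i using cc_range[OF k that] .
  show "spike V Eb (\<sigma> k) (es \<sigma>) g = es (rot (cc k) \<sigma>) g"
    unfolding e_def[symmetric] \<tau>_def[symmetric]
  proof (cases "g \<in> Eb")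
    case False then show "spike V Eb e (es \<sigma>) g = es \<tau> g" unfolding spike_def es_def by auto
  next
    case gE: True
    show "spike V Eb e (es \<sigma>) g = es \<tau> g"
    proof (cases "g = e \<and> e \<notin> bd")
      case True
      have "\<not> (\<exists>i\<in>{1..m}. \<exists>j\<in>{1..m}. i < j \<and> \<tau> j = g \<and> nbr g (\<tau> i))"
      proof
        assume "\<exists>i\<in>{1..m}. \<exists>j\<in>{1..m}. i < j \<and> \<tau> j = g \<and> nbr g (\<tau> i)"
        then obtain i j where ij: "i\<in>{1..m}" "j\<in>{1..m}" "i < j" "\<tau> j = g" by blast
        have "\<sigma> (cc k j) = \<sigma> k" using ij \<tau>i True unfolding e_def by auto
        then have "cc k j = k" using ord_inj[OF s ccr[OF ij(2)] k] by simp
        then have "j = 1" using cc_k ij by auto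
        then show False using ij by auto
      qed
      then show ?thesis using True gE int_iff[OF eE] unfolding spike_def es_def by auto
    next
      case notc: False
      show ?thesis
      proof (cases "nbr g e")
        case nb: True
        obtain j0 where j0: "j0 \<in> {1..m}" "\<sigma> j0 = g" using ord_surj[OF s gE] by blast
        have "j0 \<noteq> k" using nbr_ne[OF gE nb] j0 unfolding e_def by auto
        then have "1 < dd k j0" "dd k j0 \<in> {1..m}" using dd_gt[OF k1] dd_range[OF k j0(1)] j0 by auto
        moreover have "\<tau> (dd k j0) = g" using \<tau>i[OF dd_range[OF k j0(1)]] cc_dd[OF k1] j0 by auto
        ultimately have "\<exists>i\<in>{1..m}. \<exists>j\<in>{1..m}. i < j \<and> \<tau> j = g \<and> nbr g (\<tau> i)"
          using \<tau>1 nb k by (intro bexI[of _ 1] bexI[of _ "dd k j0"]) auto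
        then show ?thesis using nb gE nbr_ne[OF gE nb] unfolding spike_def es_def by auto
      next
        case nnb: False
        have sp: "spike V Eb e (es \<sigma>) g = es \<sigma> g"
          using notc nnb gE int_iff[OF eE] unfolding spike_def by auto
        have eqv: "(\<exists>i\<in>{1..m}. \<exists>j\<in>{1..m}. i < j \<and> \<tau> j = g \<and> nbr g (\<tau> i)) \<longleftrightarrow>
                   (\<exists>i\<in>{1..m}. \<exists>j\<in>{1..m}. i < j \<and> \<sigma> j = g \<and> nbr g (\<sigma> i))"
          if "g \<noteq> e"
        proof
          assume "\<exists>i\<in>{1..m}. \<exists>j\<in>{1..m}. i < j \<and> \<tau> j = g \<and> nbr g (\<tau> i)"
          then obtain i j where ij: "i\<in>{1..m}" "j\<in>{1..m}" "i < j" "\<tau> j = g" "nbr g (\<tau> i)" by blast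
          have "i \<noteq> 1" using ij \<tau>1 nnb by auto
          then have "2 \<le> i" using ij by auto
          then have "cc k i < cc k j" using cc_mono[OF k1] ij by auto
          then show "\<exists>i\<in>{1..m}. \<exists>j\<in>{1..m}. i < j \<and> \<sigma> j = g \<and> nbr g (\<sigma> i)"
            using ij \<tau>i ccr by (metis)
        next
          assume "\<exists>i\<in>{1..m}. \<exists>j\<in>{1..m}. i < j \<and> \<sigma> j = g \<and> nbr g (\<sigma> i)"
          then obtain i j where ij: "i\<in>{1..m}" "j\<in>{1..m}" "i < j" "\<sigma> j = g" "nbr g (\<sigma> i)" by blast
          have "i \<noteq> k" using ij nnb unfolding e_def by auto
          moreover have "j \<noteq> k" using ij that unfolding e_def by auto
          ultimately have "dd k i < dd k j" using dd_mono[OF k1] ij by auto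
          moreover have "\<tau> (dd k j) = g" "\<tau> (dd k i) = \<sigma> i"
            using \<tau>i[OF dd_range[OF k ij(1)]] \<tau>i[OF dd_range[OF k ij(2)]] cc_dd[OF k1] ij by auto
          ultimately show "\<exists>i\<in>{1..m}. \<exists>j\<in>{1..m}. i < j \<and> \<tau> j = g \<and> nbr g (\<tau> i)"
            using ij dd_range[OF k] by (metis)
        qed
        show ?thesis
        proof (cases "g = e")
          case True
          then have "g \<in> bd" using notc by auto
          then show ?thesis using sp unfolding es_def by auto
        next
          case False
          then show ?thesis using sp eqv unfolding es_def by auto
        qed
      qed
    qed
  qed
qed

end

context setting begin

lemma ord_fin: "finite (orderings Eb)"
proof -
  have "orderings Eb \<subseteq> {1..m} \<rightarrow>\<^sub>E Eb" unfolding orderings_def by blast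
  moreover have "finite ({1..m} \<rightarrow>\<^sub>E Eb)" using finEb by (intro finite_PiE) auto
  ultimately show ?thesis by (rule finite_subset)
qed

lemma ord_ne: "orderings Eb \<noteq> {}"
proof -
  obtain h where h: "bij_betw h {1..m} Eb" using ex_bij_betw_nat_finite_1[OF finEb] by blast
  have b: "bij_betw (restrict h {1..m}) {1..m} Eb"
    using h by (rule bij_betw_cong[THEN iffD1, rotated]) simp
  have "restrict h {1..m} \<in> {1..m} \<rightarrow>\<^sub>E Eb"
    using h unfolding bij_betw_def by (intro restrict_PiE_iff[THEN iffD2]) blast
  then have "restrict h {1..m} \<in> orderings Eb" using b unfolding orderings_def by blast
  then show ?thesis by blast
qed

lemma sum_rot:
  "(\<Sum>\<sigma>\<in>orderings Eb. \<Sum>e\<in>Eb. F (spike V Eb e (es \<sigma>))) = real m * (\<Sum>\<sigma>\<in>orderings Eb. F (es \<sigma>))"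
proof -
  have "(\<Sum>e\<in>Eb. F (spike V Eb e (es \<sigma>))) = (\<Sum>k\<in>{1..m}. F (es (rot (cc k) \<sigma>)))"
    if s: "\<sigma> \<in> orderings Eb" for \<sigma>
  proof -
    have "(\<Sum>e\<in>Eb. F (spike V Eb e (es \<sigma>))) = (\<Sum>k\<in>{1..m}. F (spike V Eb (\<sigma> k) (es \<sigma>)))"
      using sum.reindex_bij_betw[OF ord_bij[OF s], of "\<lambda>e. F (spike V Eb e (es \<sigma>))"] by simp
    also have "\<dots> = (\<Sum>k\<in>{1..m}. F (es (rot (cc k) \<sigma>)))"
      by (rule sum.cong[OF refl]) (simp add: spike_rot[OF s])
    finally show ?thesis .
  qed
  then have "(\<Sum>\<sigma>\<in>orderings Eb. \<Sum>e\<in>Eb. F (spike V Eb e (es \<sigma>)))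
      = (\<Sum>\<sigma>\<in>orderings Eb. \<Sum>k\<in>{1..m}. F (es (rot (cc k) \<sigma>)))" by (rule sum.cong[OF refl])
  also have "\<dots> = (\<Sum>k\<in>{1..m}. \<Sum>\<sigma>\<in>orderings Eb. F (es (rot (cc k) \<sigma>)))" by (rule sum.swap)
  also have "\<dots> = (\<Sum>k\<in>{1..m}. \<Sum>\<sigma>\<in>orderings Eb. F (es \<sigma>))"
  proof (rule sum.cong[OF refl])
    fix k assume k: "k \<in> {1..m}"
    show "(\<Sum>\<sigma>\<in>orderings Eb. F (es (rot (cc k) \<sigma>))) = (\<Sum>\<sigma>\<in>orderings Eb. F (es \<sigma>))"
      using sum.reindex_bij_betw[OF rot_bij[OF k], of "\<lambda>\<sigma>. F (es \<sigma>)"] .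
  qed
  also have "\<dots> = real m * (\<Sum>\<sigma>\<in>orderings Eb. F (es \<sigma>))" by simp
  finally show ?thesis .
qed

lemma law_inv: "invariant_measure V B Eb (perfect_sim_law B Eb)"
  unfolding invariant_measure_def
proof (intro conjI allI)
  show "set_pmf (perfect_sim_law B Eb) \<subseteq> S"
    unfolding perfect_sim_law_def using ord_fin ord_ne eta_star_es es_S by auto
  fix f :: "(('v \<times> 'v) \<Rightarrow> nat) \<Rightarrow> real"
  have "measure_pmf.expectation (perfect_sim_law B Eb) (generator V Eb f)
      = (\<Sum>\<sigma>\<in>orderings Eb. generator V Eb f (eta_star B Eb \<sigma>)) / card (orderings Eb)"
    unfolding perfect_sim_law_def using ord_fin ord_ne by (simp add: integral_pmf_of_set)
  also have "(\<Sum>\<sigma>\<in>orderings Eb. generator V Eb f (eta_star B Eb \<sigma>))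
      = (\<Sum>\<sigma>\<in>orderings Eb. (\<Sum>e\<in>Eb. f (spike V Eb e (es \<sigma>))) - real m * f (es \<sigma>))"
    by (rule sum.cong[OF refl]) (simp add: eta_star_es gen_S es_S sum_subtractf)
  also have "\<dots> = 0"
    by (simp add: sum_subtractf sum_rot sum_distrib_left)
  finally show "measure_pmf.expectation (perfect_sim_law B Eb) (generator V Eb f) = 0" by simp
qed

end

context setting begin

definition PP :: "('v \<times> 'v \<Rightarrow> nat) pmf \<Rightarrow> (('v \<times> 'v \<Rightarrow> nat) \<Rightarrow> real) \<Rightarrow> real" where
  "PP p g = (\<Sum>\<eta>\<in>S. g \<eta> * pmf p \<eta>)"

lemma exp_PP: assumes "set_pmf p \<subseteq> S" shows "measure_pmf.expectation p g = PP p g"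
  unfolding PP_def using assms finS by (intro integral_measure_pmf_real) auto

lemma inv_PP: assumes "invariant_measure V B Eb p"
  shows "(\<Sum>e\<in>Eb. PP p (\<lambda>\<eta>. f (spike V Eb e \<eta>))) = real m * PP p f"
proof -
  have sub: "set_pmf p \<subseteq> S" using assms unfolding invariant_measure_def by blast
  have "0 = measure_pmf.expectation p (generator V Eb f)" using assms unfolding invariant_measure_def by simp
  also have "\<dots> = PP p (generator V Eb f)" by (rule exp_PP[OF sub])
  also have "\<dots> = (\<Sum>\<eta>\<in>S. (\<Sum>e\<in>Eb. f (spike V Eb e \<eta>) - f \<eta>) * pmf p \<eta>)"
    unfolding PP_def by (rule sum.cong[OF refl]) (simp add: gen_S)
  also have "\<dots> = (\<Sum>e\<in>Eb. PP p (\<lambda>\<eta>. f (spike V Eb e \<eta>))) - real m * PP p f"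
  proof -
    have 1: "(\<Sum>e\<in>Eb. f (spike V Eb e \<eta>) - f \<eta>) * pmf p \<eta> =
        (\<Sum>e\<in>Eb. f (spike V Eb e \<eta>) * pmf p \<eta>) - real m * (f \<eta> * pmf p \<eta>)" for \<eta>
      by (simp add: sum_subtractf sum_distrib_right left_diff_distrib)
    have 2: "(\<Sum>\<eta>\<in>S. \<Sum>e\<in>Eb. f (spike V Eb e \<eta>) * pmf p \<eta>) = (\<Sum>e\<in>Eb. \<Sum>\<eta>\<in>S. f (spike V Eb e \<eta>) * pmf p \<eta>)"
      by (rule sum.swap)
    have "(\<Sum>\<eta>\<in>S. (\<Sum>e\<in>Eb. f (spike V Eb e \<eta>) - f \<eta>) * pmf p \<eta>) =
      (\<Sum>\<eta>\<in>S. (\<Sum>e\<in>Eb. f (spike V Eb e \<eta>) * pmf p \<eta>) - real m * (f \<eta> * pmf p \<eta>))"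
      by (rule sum.cong[OF refl]) (rule 1)
    also have "\<dots> = (\<Sum>e\<in>Eb. \<Sum>\<eta>\<in>S. f (spike V Eb e \<eta>) * pmf p \<eta>) - real m * (\<Sum>\<eta>\<in>S. f \<eta> * pmf p \<eta>)"
      by (simp only: sum_subtractf 2 sum_distrib_left)
    finally show ?thesis unfolding PP_def .
  qed
  finally show ?thesis by simp
qed

definition det :: "('v \<times> 'v) set \<Rightarrow> ('v \<times> 'v \<Rightarrow> nat) set \<Rightarrow> bool" where
  "det D A \<longleftrightarrow> (\<forall>\<eta>\<in>S. \<forall>\<eta>'\<in>S. (\<forall>x\<in>D. \<eta> x = \<eta>' x) \<longrightarrow> (\<eta> \<in> A \<longleftrightarrow> \<eta>' \<in> A))"

definition Ae :: "('v \<times> 'v) \<Rightarrow> ('v \<times> 'v \<Rightarrow> nat) set \<Rightarrow> ('v \<times> 'v \<Rightarrow> nat) set" where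
  "Ae e A = {\<eta>\<in>S. spike V Eb e \<eta> \<in> A}"

lemma det_Ae: assumes "det D A" "e \<in> Eb" shows "det D (Ae e A)"
  unfolding det_def Ae_def
proof (intro ballI impI)
  fix \<eta> \<eta>' assume h: "\<eta> \<in> S" "\<eta>' \<in> S" "\<forall>x\<in>D. \<eta> x = \<eta>' x"
  have "\<forall>x\<in>D. spike V Eb e \<eta> x = spike V Eb e \<eta>' x" using h(3) unfolding spike_def by auto
  moreover have "spike V Eb e \<eta> \<in> S" "spike V Eb e \<eta>' \<in> S" using spike_S h assms(2) by auto
  ultimately have "spike V Eb e \<eta> \<in> A \<longleftrightarrow> spike V Eb e \<eta>' \<in> A"
    using assms(1) unfolding det_def by blast
  then show "(\<eta> \<in> {\<eta> \<in> S. spike V Eb e \<eta> \<in> A}) = (\<eta>' \<in> {\<eta> \<in> S. spike V Eb e \<eta> \<in> A})"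
    using h by simp
qed

lemma det_Ae_in: assumes "det D A" "e \<in> D" "e \<in> Eb - bd" shows "det (D - {e}) (Ae e A)"
  unfolding det_def Ae_def
proof (intro ballI impI)
  fix \<eta> \<eta>' assume h: "\<eta> \<in> S" "\<eta>' \<in> S" "\<forall>x\<in>D - {e}. \<eta> x = \<eta>' x"
  have V: "snd e \<in> V" using assms(3) int_iff by auto
  have "\<forall>x\<in>D. spike V Eb e \<eta> x = spike V Eb e \<eta>' x" using h(3) V assms(3) unfolding spike_def by auto
  moreover have "spike V Eb e \<eta> \<in> S" "spike V Eb e \<eta>' \<in> S" using spike_S h assms(3) by auto
  ultimately have "spike V Eb e \<eta> \<in> A \<longleftrightarrow> spike V Eb e \<eta>' \<in> A"
    using assms(1) unfolding det_def by blast
  then show "(\<eta> \<in> {\<eta> \<in> S. spike V Eb e \<eta> \<in> A}) = (\<eta>' \<in> {\<eta> \<in> S. spike V Eb e \<eta> \<in> A})"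
    using h by simp
qed

lemma PP_Ae: assumes "e \<in> Eb"
  shows "PP p (\<lambda>\<eta>. indicator A (spike V Eb e \<eta>)) = PP p (indicator (Ae e A))"
  unfolding PP_def Ae_def by (rule sum.cong[OF refl]) (auto simp: indicator_def)

end

context setting begin

lemma PP_ind1: "\<eta>0 \<in> S \<Longrightarrow> PP p (indicator {\<eta>0}) = pmf p \<eta>0"
  unfolding PP_def using finS by (simp add: indicator_def if_distrib cong: if_cong)

lemma PP_empty: "PP p (indicator {}) = 0"
  unfolding PP_def by simp

lemma PP_S: "set_pmf p \<subseteq> S \<Longrightarrow> PP p (indicator S) = 1"
  unfolding PP_def using sum_pmf_eq_1[OF finS] by simp

lemma core:
  assumes ip: "invariant_measure V B Eb p" and iq: "invariant_measure V B Eb q"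
  defines "dA \<equiv> \<lambda>A. PP p (indicator A) - PP q (indicator A)"
  assumes fD: "finite D"
  shows "D \<subseteq> Eb - bd \<Longrightarrow> A \<subseteq> S \<Longrightarrow> det D A \<Longrightarrow> dA A = 0"
  using fD
proof (induction D arbitrary: A rule: finite_psubset_induct)
  case (psubset D)
  have subp: "set_pmf p \<subseteq> S" and subq: "set_pmf q \<subseteq> S"
    using ip iq unfolding invariant_measure_def by blast+
  have eqn: "real m * dA A = (\<Sum>e\<in>Eb. dA (Ae e A))" for A
  proof -
    have "(\<Sum>e\<in>Eb. PP r (indicator (Ae e A))) = real m * PP r (indicator A)"
      if "invariant_measure V B Eb r" for r
    proof -
      have "(\<Sum>e\<in>Eb. PP r (indicator (Ae e A))) = (\<Sum>e\<in>Eb. PP r (\<lambda>\<eta>. indicator A (spike V Eb e \<eta>)))"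
        by (rule sum.cong[OF refl]) (simp add: PP_Ae)
      also have "\<dots> = real m * PP r (indicator A)" by (rule inv_PP[OF that])
      finally show ?thesis .
    qed
    then show ?thesis unfolding dA_def using ip iq by (simp add: sum_subtractf right_diff_distrib)
  qed
  show ?case
  proof (cases "D = {}")
    case True
    show ?thesis
    proof (cases "A = {}")
      case True then show ?thesis unfolding dA_def by (simp add: PP_empty)
    next
      case False
      then obtain \<eta>0 where "\<eta>0 \<in> A" by blast
      then have "A = S" using psubset.prems \<open>D = {}\<close> unfolding det_def by blast
      then show ?thesis unfolding dA_def using PP_S[OF subp] PP_S[OF subq] by simp
    qed
  next
    case Dne: False
    define Fam where "Fam = {A. A \<subseteq> S \<and> det D A}"
    have finF: "finite Fam" unfolding Fam_def using finS by (simp add: finite_subset[of _ "Pow S"] subset_iff)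
    have eF: "{} \<in> Fam" unfolding Fam_def det_def by simp
    define M where "M = Max ((\<lambda>A. \<bar>dA A\<bar>) ` Fam)"
    have leM: "\<bar>dA A\<bar> \<le> M" if "A \<in> Fam" for A
      unfolding M_def using finF that by (intro Max_ge) auto
    have cD: "card D \<le> m" using psubset.prems(1) finEb by (intro card_mono) auto
    have key: "real m * \<bar>dA A\<bar> \<le> (real m - real (card D)) * M" if AF: "A \<in> Fam" for A
    proof -
      have DE: "D \<subseteq> Eb" using psubset.prems(1) by blast
      have z: "(\<Sum>e\<in>D. dA (Ae e A)) = 0"
      proof (rule sum.neutral, rule ballI)
        fix e assume e: "e \<in> D"
        have "D - {e} \<subset> D" using e by blast
        moreover have "D - {e} \<subseteq> Eb - bd" using psubset.prems(1) by blast
        moreover have "Ae e A \<subseteq> S" unfolding Ae_def by blast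
        moreover have "det (D - {e}) (Ae e A)"
          using det_Ae_in[of D A e] AF e psubset.prems(1) unfolding Fam_def by blast
        ultimately show "dA (Ae e A) = 0" using psubset.IH by blast
      qed
      have "real m * dA A = (\<Sum>e\<in>Eb - D. dA (Ae e A)) + (\<Sum>e\<in>D. dA (Ae e A))"
        unfolding eqn using sum.subset_diff[OF DE finEb] by simp
      then have "real m * dA A = (\<Sum>e\<in>Eb - D. dA (Ae e A))" using z by simp
      then have "\<bar>real m * dA A\<bar> \<le> (\<Sum>e\<in>Eb - D. \<bar>dA (Ae e A)\<bar>)" by (simp add: sum_abs)
      also have "\<dots> \<le> (\<Sum>e\<in>Eb - D. M)"
      proof (rule sum_mono)
        fix e assume "e \<in> Eb - D"
        then have "Ae e A \<in> Fam" using det_Ae[of D A e] AF unfolding Fam_def Ae_def by auto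
        then show "\<bar>dA (Ae e A)\<bar> \<le> M" by (rule leM)
      qed
      also have "\<dots> = real (card (Eb - D)) * M" by simp
      also have "real (card (Eb - D)) = real m - real (card D)"
        using card_Diff_subset[OF finite_subset[OF DE finEb] DE] cD by simp
      finally show ?thesis by (simp add: abs_mult)
    qed
    have "M \<in> (\<lambda>A. \<bar>dA A\<bar>) ` Fam" unfolding M_def using finF eF by (intro Max_in) auto
    then obtain A0 where A0: "A0 \<in> Fam" "\<bar>dA A0\<bar> = M" by (metis imageE)
    have "real m * M \<le> (real m - real (card D)) * M" using key[OF A0(1)] A0(2) by simp
    then have "real (card D) * M \<le> 0" by (simp add: algebra_simps)
    moreover have "card D > 0" using Dne psubset.hyps by auto
    ultimately have "M \<le> 0" by (simp add: mult_le_0_iff)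
    moreover have "A \<in> Fam" unfolding Fam_def using psubset.prems by blast
    ultimately show ?thesis using leM by fastforce
  qed
qed

lemma unique: assumes ip: "invariant_measure V B Eb p" "invariant_measure V B Eb q" shows "p = q"
proof (rule pmf_eqI)
  fix \<eta>0
  have subp: "set_pmf p \<subseteq> S" and subq: "set_pmf q \<subseteq> S"
    using ip unfolding invariant_measure_def by blast+
  show "pmf p \<eta>0 = pmf q \<eta>0"
  proof (cases "\<eta>0 \<in> S")
    case False
    then show ?thesis using subp subq by (metis pmf_eq_0_set_pmf subsetD)
  next
    case True
    have fD: "finite (Eb - bd)" using finEb by simp
    have "det (Eb - bd) {\<eta>0}" unfolding det_def
    proof (intro ballI impI)
      fix \<eta> \<eta>' assume h: "\<eta> \<in> S" "\<eta>' \<in> S" "\<forall>x\<in>Eb - bd. \<eta> x = \<eta>' x"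
      have "\<eta> = \<eta>'"
      proof
        fix x show "\<eta> x = \<eta>' x"
        proof -
          have a: "\<forall>e. e \<notin> Eb \<longrightarrow> \<eta> e = 0" "\<forall>e. e \<notin> Eb \<longrightarrow> \<eta>' e = 0"
            "\<forall>e\<in>bd. \<eta> e = 1" "\<forall>e\<in>bd. \<eta>' e = 1"
            using h(1,2) unfolding S_iff by blast+
          show ?thesis using a h(3) by (metis DiffI)
        qed
      qed
      then show "(\<eta> \<in> {\<eta>0}) = (\<eta>' \<in> {\<eta>0})" by simp
    qed
    then have "PP p (indicator {\<eta>0}) - PP q (indicator {\<eta>0}) = 0"
      using core[OF ip(1) ip(2) fD, of "{\<eta>0}"] True by blast
    then show ?thesis using PP_ind1[OF True] by simp
  qed
qed

end

theorem mainTheorem9: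
  fixes V B :: "'v set" and Eb :: "('v \<times> 'v) set"
  assumes "finite V" and "finite B" and "V \<inter> B = {}"
    and "Eb \<subseteq> V \<times> (V \<union> B)"
    and "\<forall>(i, j)\<in>Eb. i \<noteq> j"
    and "\<forall>(i, j)\<in>Eb. (j, i) \<notin> Eb"
    and "graph_connected (V \<union> B) Eb"
  shows "invariant_measure V B Eb (perfect_sim_law B Eb)
    \<and> (\<forall>p. invariant_measure V B Eb p \<longrightarrow> p = perfect_sim_law B Eb)"
proof -
  interpret setting V B Eb using assms by unfold_locales auto
  show ?thesis using law_inv unique by blast
qed

end
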